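(* Let $I=I_{\mathbf a,\mathbf b}\subset S=K[x,y]$ be a nonzero proper monomial ideal. Then $$\mathrm{v}(I)=\begin{cases}\min\{a_i+b_{i+1}-2: 1\le i\le m-1\}, & \text{if } b_1=0 \text{ and } a_m=0,\\ \min\{a_1+b_1-1,\ a_i+b_{i+1}-2: 1\le i\le m-1\}, & \text{if } b_1\ne0\text{ and } a_m=0,\\ \min\{a_m+b_m-1,\ a_i+b_{i+1}-2: 1\le i\le m-1\}, & \text{if } b_1=0\text{ and } a_m\ne0,\\ \min\{a_1+b_1-1,\ a_m+b_m-1,\ a_i+b_{i+1}-2: 1\le i\le m-1\}, & \text{otherwise}.\end{cases}$$ (When $m=1$ the terms $a_i+b_{i+1}-2$ are absent.)
   Context: $S=K[x,y]$ over a field $K$, standard graded, $S_d$ its degree-$d$ component. Every nonzero monomial ideal $I$ of $S$ has minimal monomial generating set $\{x^{a_1}y^{b_1},\dots,x^{a_m}y^{b_m}\}$ with $a_1>\dots>a_m\ge0$ and $0\le b_1<\dots<b_m$; this is denoted $I=I_{\mathbf a,\mathbf b}$. For a graded ideal $J$, $\mathrm{v}(J)=\min\{d:\exists f\in S_d\text{ with }(J:f)\in\operatorname{Ass}(J)\}$. *)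

theory Defs
  imports "HOL-Computational_Algebra.Polynomial"
begin

text \<open>S = K[x,y] is represented as (K[x])[y], i.e. the type 'k poly poly:
  the outer variable is y, the inner variable is x.\<close>

definition xy_monom :: "nat \<Rightarrow> nat \<Rightarrow> 'k::field poly poly" where
  "xy_monom a b = monom (monom 1 a) b"

text \<open>Homogeneous of total degree d (the zero polynomial lies in every S_d).\<close>
definition homog :: "nat \<Rightarrow> 'k::field poly poly \<Rightarrow> bool" where
  "homog d f \<longleftrightarrow> (\<forall>i j. coeff (coeff f j) i \<noteq> 0 \<longrightarrow> i + j = d)"

definition is_ideal :: "'k::field poly poly set \<Rightarrow> bool" where
  "is_ideal I \<longleftrightarrow> 0 \<in> I \<and> (\<forall>p\<in>I. \<forall>q\<in>I. p + q \<in> I) \<and> (\<forall>r. \<forall>p\<in>I. r * p \<in> I)"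

definition ideal_gen :: "'k::field poly poly set \<Rightarrow> 'k poly poly set" where
  "ideal_gen G = \<Inter>{J. is_ideal J \<and> G \<subseteq> J}"

definition colon :: "'k::field poly poly set \<Rightarrow> 'k poly poly \<Rightarrow> 'k poly poly set" where
  "colon J f = {g. g * f \<in> J}"

definition is_prime_ideal :: "'k::field poly poly set \<Rightarrow> bool" where
  "is_prime_ideal P \<longleftrightarrow> is_ideal P \<and> P \<noteq> UNIV \<and> (\<forall>p q. p * q \<in> P \<longrightarrow> p \<in> P \<or> q \<in> P)"

definition Ass :: "'k::field poly poly set \<Rightarrow> 'k poly poly set set" where
  "Ass J = {P. is_prime_ideal P \<and> (\<exists>f. P = colon J f)}"

definition vnum :: "'k::field poly poly set \<Rightarrow> nat" where
  "vnum J = (LEAST d. \<exists>f. homog d f \<and> colon J f \<in> Ass J)"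

end

theory Submission
  imports Defs
begin


definition UU :: "(nat \<Rightarrow> nat) \<Rightarrow> (nat \<Rightarrow> nat) \<Rightarrow> nat \<Rightarrow> nat \<Rightarrow> nat \<Rightarrow> bool" where
  "UU a b m i j \<longleftrightarrow> (\<exists>k. 1 \<le> k \<and> k \<le> m \<and> a k \<le> i \<and> b k \<le> j)"

definition MM :: "(nat \<Rightarrow> nat) \<Rightarrow> (nat \<Rightarrow> nat) \<Rightarrow> nat \<Rightarrow> 'k::field poly poly set" where
  "MM a b m = {f. \<forall>i j. coeff (coeff f j) i \<noteq> 0 \<longrightarrow> UU a b m i j}"

lemma UU_mono: "UU a b m i j \<Longrightarrow> i \<le> i' \<Longrightarrow> j \<le> j' \<Longrightarrow> UU a b m i' j'"
  unfolding UU_def by (meson order_trans)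

lemma coeff_xy_monom_mult:
  "coeff (coeff (xy_monom s t * f) j) i = (if s \<le> i \<and> t \<le> j then coeff (coeff f (j-t)) (i-s) else (0::'k::field))"
  unfolding xy_monom_def by (simp add: coeff_monom_mult)

lemma coeff_xy_monom: "coeff (coeff (xy_monom s t :: 'k::field poly poly) j) i = (if i = s \<and> j = t then 1 else 0)"
  unfolding xy_monom_def by simp

lemma coeff_prod_nz:
  fixes r p :: "'k::field poly poly"
  assumes "coeff (coeff (r*p) j) i \<noteq> 0"
  shows "\<exists>i1\<le>i. \<exists>j1\<le>j. coeff (coeff p j1) i1 \<noteq> 0"
proof (rule ccontr)
  assume H: "\<not> ?thesis"
  have "coeff (coeff (r*p) j) i = (\<Sum>k\<le>j. \<Sum>l\<le>i. coeff (coeff r k) l * coeff (coeff p (j-k)) (i-l))"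
    by (simp add: coeff_mult coeff_sum)
  also have "\<dots> = 0"
    using H by (intro sum.neutral ballI) auto
  finally show False using assms by simp
qed

lemma ideal_sum_aux: "finite A \<Longrightarrow> is_ideal J \<Longrightarrow> (\<forall>x\<in>A. g x \<in> J) \<Longrightarrow> sum g A \<in> J"
  by (induction A rule: finite_induct) (auto simp: is_ideal_def)

lemma ideal_sum: "is_ideal J \<Longrightarrow> finite A \<Longrightarrow> (\<forall>x\<in>A. g x \<in> J) \<Longrightarrow> sum g A \<in> J"
  using ideal_sum_aux by blast

lemma ideal_gen_ideal: "is_ideal (ideal_gen G)"
  unfolding ideal_gen_def is_ideal_def by auto

lemma ideal_gen_sup: "G \<subseteq> ideal_gen G"
  unfolding ideal_gen_def by auto

lemma ideal_gen_least: "is_ideal J \<Longrightarrow> G \<subseteq> J \<Longrightarrow> ideal_gen G \<subseteq> J"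
  unfolding ideal_gen_def by auto

lemma MM_ideal: "is_ideal (MM a b m :: 'k::field poly poly set)"
proof -
  have 1: "p + q \<in> MM a b m" if "p \<in> MM a b m" "q \<in> MM a b m" for p q :: "'k poly poly"
    unfolding MM_def
  proof (intro CollectI allI impI)
    fix i j assume nz: "coeff (coeff (p + q) j) i \<noteq> 0"
    have "coeff (coeff p j) i \<noteq> 0 \<or> coeff (coeff q j) i \<noteq> 0"
      using nz by auto
    then show "UU a b m i j" using that unfolding MM_def by blast
  qed
  have 2: "r * p \<in> MM a b m" if A: "p \<in> MM a b m" for r p :: "'k poly poly"
    unfolding MM_def
  proof (intro CollectI allI impI)
    fix i j assume "coeff (coeff (r*p) j) i \<noteq> 0"
    then obtain i1 j1 where "i1 \<le> i" "j1 \<le> j" "coeff (coeff p j1) i1 \<noteq> 0"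
      using coeff_prod_nz by blast
    then show "UU a b m i j" using A UU_mono unfolding MM_def by blast
  qed
  have 0: "0 \<in> MM a b m" by (simp add: MM_def)
  show ?thesis unfolding is_ideal_def using 0 1 2 by blast
qed

lemma ideal_gen_zero: "0 \<in> ideal_gen G"
  using ideal_gen_ideal unfolding is_ideal_def by blast

lemma ideal_mult: "is_ideal J \<Longrightarrow> p \<in> J \<Longrightarrow> r * p \<in> J"
  by (simp add: is_ideal_def)

lemma monom_in_gen:
  assumes "UU a b m i j"
  shows "monom (monom c i) j \<in> ideal_gen {xy_monom (a k) (b k) :: 'k::field poly poly | k. 1 \<le> k \<and> k \<le> m}"
proof -
  obtain k where k: "1 \<le> k" "k \<le> m" "a k \<le> i" "b k \<le> j" using assms UU_def by blast
  obtain i' j' where ij: "i = i' + a k" "j = j' + b k" using k le_add_diff_inverse2 by metis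
  have eq: "monom (monom c i) j = monom (monom c i') j' * xy_monom (a k) (b k)"
    using ij by (simp only: xy_monom_def mult_monom mult_1_right)
  have mem: "xy_monom (a k) (b k) \<in> ideal_gen {xy_monom (a k) (b k) :: 'k::field poly poly | k. 1 \<le> k \<and> k \<le> m}"
    using k by (intro subsetD[OF ideal_gen_sup] CollectI exI[of _ k]) simp
  show ?thesis unfolding eq by (rule ideal_mult[OF ideal_gen_ideal mem])
qed


lemma ideal_gen_MM:
  "ideal_gen {xy_monom (a k) (b k) :: 'k::field poly poly | k. 1 \<le> k \<and> k \<le> m} = MM a b m"
proof
  show "ideal_gen {xy_monom (a k) (b k) :: 'k::field poly poly | k. 1 \<le> k \<and> k \<le> m} \<subseteq> MM a b m"
    apply (rule ideal_gen_least[OF MM_ideal])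
    apply (auto simp: MM_def coeff_xy_monom UU_def split: if_splits)
    done
next
  let ?G = "ideal_gen {xy_monom (a k) (b k) :: 'k::field poly poly | k. 1 \<le> k \<and> k \<le> m}"
  show "MM a b m \<subseteq> ?G"
  proof
    fix f :: "'k poly poly" assume f: "f \<in> MM a b m"
    have "f = (\<Sum>j\<le>degree f. monom (coeff f j) j)" by (simp add: poly_as_sum_of_monoms)
    also have "\<dots> = (\<Sum>j\<le>degree f. \<Sum>i\<le>degree (coeff f j). monom (monom (coeff (coeff f j) i) i) j)"
      by (simp add: poly_as_sum_of_monoms monom_sum[symmetric])
    also have "\<dots> \<in> ?G"
    proof (intro ideal_sum[OF ideal_gen_ideal] ballI finite_atMost)
      fix j i
      show "monom (monom (coeff (coeff f j) i) i) j \<in> ?G"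
      proof (cases "coeff (coeff f j) i = 0")
        case True then show ?thesis by (simp add: ideal_gen_zero)
      next
        case False then show ?thesis using f monom_in_gen unfolding MM_def by blast
      qed
    qed
    finally show "f \<in> ?G" .
  qed
qed




definition PXY :: "'k::field poly poly set" where "PXY = {g. coeff (coeff g 0) 0 = 0}"
definition PY :: "'k::field poly poly set" where "PY = {g. coeff g 0 = 0}"
definition phi :: "'k::field poly poly \<Rightarrow> 'k poly" where "phi g = map_poly (\<lambda>q. coeff q 0) g"
definition PX :: "'k::field poly poly set" where "PX = {g. phi g = 0}"

lemma coeff_phi: "coeff (phi g) n = coeff (coeff g n) 0"
  unfolding phi_def by (simp add: coeff_map_poly)

lemma phi_mult: "phi (g * h) = phi g * phi h"
  by (simp add: poly_eq_iff coeff_phi coeff_mult coeff_sum coeff_mult_0)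

lemma phi_add: "phi (g + h) = phi g + phi h"
  by (simp add: poly_eq_iff coeff_phi)

lemma phi_0: "phi 0 = 0" by (simp add: phi_def)

lemma mem_PX: "g \<in> PX \<longleftrightarrow> (\<forall>j. coeff (coeff g j) 0 = 0)"
  unfolding PX_def by (simp add: poly_eq_iff coeff_phi)

lemma prime_PX: "is_prime_ideal (PX :: 'k::field poly poly set)"
proof -
  have 1: "(1::'k poly poly) \<notin> PX" by (simp add: PX_def phi_def)
  have 2: "(PX :: 'k poly poly set) \<noteq> UNIV" using 1 by (metis UNIV_I)
  show ?thesis
    unfolding is_prime_ideal_def is_ideal_def
    using 2 by (simp add: PX_def phi_mult phi_add phi_0)
qed

lemma prime_PY: "is_prime_ideal (PY :: 'k::field poly poly set)"
proof -
  have 1: "(1::'k poly poly) \<notin> PY" by (simp add: PY_def)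
  have 2: "(PY :: 'k poly poly set) \<noteq> UNIV" using 1 by (metis UNIV_I)
  show ?thesis
    unfolding is_prime_ideal_def is_ideal_def
    using 2 by (simp add: PY_def coeff_mult_0)
qed

lemma prime_PXY: "is_prime_ideal (PXY :: 'k::field poly poly set)"
proof -
  have 1: "(1::'k poly poly) \<notin> PXY" by (simp add: PXY_def)
  have 2: "(PXY :: 'k poly poly set) \<noteq> UNIV" using 1 by (metis UNIV_I)
  show ?thesis
    unfolding is_prime_ideal_def is_ideal_def
    using 2 by (simp add: PXY_def coeff_mult_0)
qed

lemma mon_mult_in:
  "xy_monom s t * f \<in> MM a b m \<longleftrightarrow> (\<forall>i j. coeff (coeff f j) i \<noteq> (0::'k::field) \<longrightarrow> UU a b m (i+s) (j+t))"
proof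
  assume H: "xy_monom s t * f \<in> MM a b m"
  show "\<forall>i j. coeff (coeff f j) i \<noteq> 0 \<longrightarrow> UU a b m (i+s) (j+t)"
  proof (intro allI impI)
    fix i j assume "coeff (coeff f j) i \<noteq> 0"
    then have "coeff (coeff (xy_monom s t * f) (j+t)) (i+s) \<noteq> 0"
      by (simp add: coeff_xy_monom_mult)
    then show "UU a b m (i+s) (j+t)" using H by (simp add: MM_def)
  qed
next
  assume H: "\<forall>i j. coeff (coeff f j) i \<noteq> 0 \<longrightarrow> UU a b m (i+s) (j+t)"
  show "xy_monom s t * f \<in> MM a b m" unfolding MM_def
  proof (intro CollectI allI impI)
    fix i j assume nz: "coeff (coeff (xy_monom s t * f) j) i \<noteq> 0"
    then have "s \<le> i" "t \<le> j" "coeff (coeff f (j-t)) (i-s) \<noteq> 0"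
      by (auto simp: coeff_xy_monom_mult split: if_splits)
    then show "UU a b m i j" using H by (metis le_add_diff_inverse2)
  qed
qed

lemma colon_mon:
  "g \<in> colon (MM a b m) (xy_monom c e) \<longleftrightarrow> (\<forall>i j. coeff (coeff g j) i \<noteq> (0::'k::field) \<longrightarrow> UU a b m (i+c) (j+e))"
  unfolding colon_def by (simp add: mult.commute[of g] mon_mult_in)

lemma colon_PXY:
  assumes "\<not> UU a b m c e" "UU a b m (c+1) e" "UU a b m c (e+1)"
  shows "colon (MM a b m) (xy_monom c e) = (PXY :: 'k::field poly poly set)"
proof (intro set_eqI iffI)
  fix g :: "'k poly poly"
  assume "g \<in> colon (MM a b m) (xy_monom c e)"
  then have H: "\<forall>i j. coeff (coeff g j) i \<noteq> 0 \<longrightarrow> UU a b m (i+c) (j+e)" by (simp add: colon_mon)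
  show "g \<in> PXY" unfolding PXY_def using H[rule_format, of 0 0] assms(1) by auto
next
  fix g :: "'k poly poly"
  assume g: "g \<in> PXY"
  show "g \<in> colon (MM a b m) (xy_monom c e)" unfolding colon_mon
  proof (intro allI impI)
    fix i j assume nz: "coeff (coeff g j) i \<noteq> 0"
    then have "i \<ge> 1 \<or> j \<ge> 1" using g by (cases i; cases j) (auto simp: PXY_def)
    then show "UU a b m (i+c) (j+e)"
    proof
      assume "i \<ge> 1" then show ?thesis by (intro UU_mono[OF assms(2)]) simp_all
    next
      assume "j \<ge> 1" then show ?thesis by (intro UU_mono[OF assms(3)]) simp_all
    qed
  qed
qed

lemma colon_PX:
  assumes "\<And>k. \<not> UU a b m c (e+k)" "UU a b m (c+1) e"
  shows "colon (MM a b m) (xy_monom c e) = (PX :: 'k::field poly poly set)"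
proof (intro set_eqI iffI)
  fix g :: "'k poly poly"
  assume "g \<in> colon (MM a b m) (xy_monom c e)"
  then have H: "\<forall>i j. coeff (coeff g j) i \<noteq> 0 \<longrightarrow> UU a b m (i+c) (j+e)" by (simp add: colon_mon)
  show "g \<in> PX" unfolding mem_PX
  proof
    fix j show "coeff (coeff g j) 0 = 0" using H[rule_format, of j 0] assms(1)[of j] by (auto simp: add.commute)
  qed
next
  fix g :: "'k poly poly"
  assume g: "g \<in> PX"
  show "g \<in> colon (MM a b m) (xy_monom c e)" unfolding colon_mon
  proof (intro allI impI)
    fix i j assume nz: "coeff (coeff g j) i \<noteq> 0"
    then have "i \<ge> 1" using g by (cases i) (auto simp: mem_PX)
    then show "UU a b m (i+c) (j+e)" by (intro UU_mono[OF assms(2)]) simp_all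
  qed
qed

lemma colon_PY:
  assumes "\<And>k. \<not> UU a b m (c+k) e" "UU a b m c (e+1)"
  shows "colon (MM a b m) (xy_monom c e) = (PY :: 'k::field poly poly set)"
proof (intro set_eqI iffI)
  fix g :: "'k poly poly"
  assume "g \<in> colon (MM a b m) (xy_monom c e)"
  then have H: "\<forall>i j. coeff (coeff g j) i \<noteq> 0 \<longrightarrow> UU a b m (i+c) (j+e)" by (simp add: colon_mon)
  have "\<forall>i. coeff (coeff g 0) i = 0"
  proof
    fix i show "coeff (coeff g 0) i = 0" using H[rule_format, of 0 i] assms(1)[of i] by (auto simp: add.commute)
  qed
  then show "g \<in> PY" by (simp add: PY_def poly_eq_iff)
next
  fix g :: "'k poly poly"
  assume g: "g \<in> PY"
  show "g \<in> colon (MM a b m) (xy_monom c e)" unfolding colon_mon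
  proof (intro allI impI)
    fix i j assume nz: "coeff (coeff g j) i \<noteq> 0"
    then have "j \<ge> 1" using g by (cases j) (auto simp: PY_def)
    then show "UU a b m (i+c) (j+e)" by (intro UU_mono[OF assms(2)]) simp_all
  qed
qed

lemma homog_xy: "homog (s+t) (xy_monom s t :: 'k::field poly poly)"
  unfolding homog_def by (simp add: coeff_xy_monom)

lemma xy_monom_mult: "xy_monom s t * xy_monom s' t' = (xy_monom (s+s') (t+t') :: 'k::field poly poly)"
  unfolding xy_monom_def by (simp add: mult_monom)

lemma prime_pow:
  assumes "is_prime_ideal P" "xy_monom s0 t0 \<notin> P"
  shows "xy_monom (n*s0) (n*t0) \<notin> (P :: 'k::field poly poly set)"
proof (induction n)
  case 0
  have "(1::'k poly poly) \<notin> P"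
    using assms(1) unfolding is_prime_ideal_def is_ideal_def by (metis UNIV_eq_I mult.right_neutral)
  then show ?case by (simp add: xy_monom_def one_pCons monom_0)
next
  case (Suc n)
  have "xy_monom (Suc n*s0) (Suc n*t0) = xy_monom s0 t0 * (xy_monom (n*s0) (n*t0) :: 'k poly poly)"
    by (simp add: xy_monom_mult)
  then show ?case using Suc assms unfolding is_prime_ideal_def by metis
qed




lemma mono_a:
  fixes i j :: nat
  assumes sa: "\<And>i j. 1 \<le> i \<Longrightarrow> i < j \<Longrightarrow> j \<le> m \<Longrightarrow> a i > (a j :: nat)"
    and "1 \<le> i" "i \<le> j" "j \<le> m"
  shows "a j \<le> a i"
  using sa[of i j] assms(2-4) le_neq_implies_less[of i j] by (cases "i = j") auto

lemma mono_b:
  fixes i j :: nat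
  assumes sb: "\<And>i j. 1 \<le> i \<Longrightarrow> i < j \<Longrightarrow> j \<le> m \<Longrightarrow> b i < (b j :: nat)"
    and "1 \<le> i" "i \<le> j" "j \<le> m"
  shows "b i \<le> b j"
  using sb[of i j] assms(2-4) le_neq_implies_less[of i j] by (cases "i = j") auto

lemma socle:
  assumes sa: "\<And>i j. 1 \<le> i \<Longrightarrow> i < j \<Longrightarrow> j \<le> m \<Longrightarrow> a i > (a j :: nat)"
    and sb: "\<And>i j. 1 \<le> i \<Longrightarrow> i < j \<Longrightarrow> j \<le> m \<Longrightarrow> b i < (b j :: nat)"
    and h: "\<not> UU a b m i j" "UU a b m (i+1) j" "UU a b m i (j+1)"
  shows "\<exists>l. 1 \<le> l \<and> l \<le> m - 1 \<and> i + j = a l + b (l+1) - 2"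
proof -
  obtain k1 where k1: "1 \<le> k1" "k1 \<le> m" "a k1 \<le> i+1" "b k1 \<le> j" using h(2) UU_def by blast
  obtain k2 where k2: "1 \<le> k2" "k2 \<le> m" "a k2 \<le> i" "b k2 \<le> j+1" using h(3) UU_def by blast
  have ak1: "a k1 = i+1" using k1 h(1) unfolding UU_def by force
  have bk2: "b k2 = j+1" using k2 h(1) unfolding UU_def by force
  have lt: "k1 < k2"
  proof (rule ccontr)
    assume "\<not> k1 < k2"
    then have "a k1 \<le> a k2" using mono_a[where a=a and m=m and i=k2 and j=k1, OF sa] k1 k2 by simp
    then show False using ak1 k2 by simp
  qed
  have eq: "k2 = k1 + 1"
  proof (rule ccontr)
    assume "k2 \<noteq> k1 + 1"
    then have "k1 + 1 < k2" using lt by simp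
    then have "a (k1+1) < a k1" "b (k1+1) < b k2" using sa[of k1 "k1+1"] sb[of "k1+1" k2] k1 k2 by auto
    then have "UU a b m i j" unfolding UU_def using ak1 bk2 k1 k2 \<open>k1 + 1 < k2\<close>
      by (intro exI[of _ "k1+1"]) auto
    then show False using h(1) by simp
  qed
  have "k1 \<le> m - 1" using eq k2 by simp
  moreover have "i + j = a k1 + b (k1+1) - 2" using ak1 bk2 eq by simp
  ultimately show ?thesis using k1 by blast
qed



lemma Ass_mem: "is_prime_ideal (colon J f) \<Longrightarrow> colon J f \<in> Ass J"
  unfolding Ass_def by blast

theorem theorem5p6:
  fixes I :: "'k::field poly poly set"
    and m :: nat and a b :: "nat \<Rightarrow> nat"
  assumes "m \<ge> 1"
    and "\<And>i j. 1 \<le> i \<Longrightarrow> i < j \<Longrightarrow> j \<le> m \<Longrightarrow> a i > a j"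
    and "\<And>i j. 1 \<le> i \<Longrightarrow> i < j \<Longrightarrow> j \<le> m \<Longrightarrow> b i < b j"
    and "I = ideal_gen {xy_monom (a i) (b i) | i. 1 \<le> i \<and> i \<le> m}"
    and "I \<noteq> UNIV"
  shows "vnum I =
    (let D = {a i + b (i + 1) - 2 | i. 1 \<le> i \<and> i \<le> m - 1} in
     if b 1 = 0 \<and> a m = 0 then Min D
     else if b 1 \<noteq> 0 \<and> a m = 0 then Min (insert (a 1 + b 1 - 1) D)
     else if b 1 = 0 \<and> a m \<noteq> 0 then Min (insert (a m + b m - 1) D)
     else Min (insert (a 1 + b 1 - 1) (insert (a m + b m - 1) D)))"
proof -
  note m1 = assms(1) and sa = assms(2) and sb = assms(3)
  have IM: "I = MM a b m" unfolding assms(4) by (rule ideal_gen_MM)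
  define U where "U = UU a b m"
  have U00: "\<not> U 0 0"
  proof
    assume "U 0 0"
    then have "\<forall>f. f \<in> MM a b m" unfolding MM_def U_def using UU_mono by blast
    then show False using assms(5) IM by auto
  qed
  define D where "D = {a i + b (i + 1) - 2 | i. 1 \<le> i \<and> i \<le> m - 1}"
  have finD: "finite D"
  proof -
    have "D = (\<lambda>i. a i + b (i + 1) - 2) ` {1..m-1}" unfolding D_def by auto
    then show ?thesis by simp
  qed
  define T where "T = D \<union> {t. b 1 \<noteq> 0 \<and> t = a 1 + b 1 - 1} \<union> {t. a m \<noteq> 0 \<and> t = a m + b m - 1}"
  have finT: "finite T"
  proof -
    have "T \<subseteq> D \<union> {a 1 + b 1 - 1, a m + b m - 1}" unfolding T_def by auto
    then show ?thesis using finD finite_subset by blast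
  qed
  have neT: "T \<noteq> {}"
  proof (cases "b 1 = 0 \<and> a m = 0")
    case True
    have "m \<noteq> 1" using True U00 unfolding U_def UU_def using m1 by auto
    then have "a 1 + b (1+1) - 2 \<in> D" unfolding D_def using m1 by (intro CollectI exI[of _ "1::nat"]) auto
    then show ?thesis unfolding T_def by auto
  next
    case False then show ?thesis unfolding T_def by auto
  qed
  have rhs: "(let D = {a i + b (i + 1) - 2 | i. 1 \<le> i \<and> i \<le> m - 1} in
     if b 1 = 0 \<and> a m = 0 then Min D
     else if b 1 \<noteq> 0 \<and> a m = 0 then Min (insert (a 1 + b 1 - 1) D)
     else if b 1 = 0 \<and> a m \<noteq> 0 then Min (insert (a m + b m - 1) D)
     else Min (insert (a 1 + b 1 - 1) (insert (a m + b m - 1) D))) = Min T"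
    unfolding Let_def D_def[symmetric] T_def
    by (cases "b 1 = 0"; cases "a m = 0") (auto simp: insert_commute)
  have good: "\<exists>f. homog t f \<and> colon I f \<in> Ass I" if "t \<in> T" for t
  proof -
    consider (d) "t \<in> D" | (l) "b 1 \<noteq> 0" "t = a 1 + b 1 - 1" | (r) "a m \<noteq> 0" "t = a m + b m - 1"
      using \<open>t \<in> T\<close> unfolding T_def by blast
    then show ?thesis
    proof cases
      case d
      then obtain l where l: "1 \<le> l" "l \<le> m - 1" "t = a l + b (l+1) - 2" unfolding D_def by blast
      have al: "a l > a (l+1)" and bl: "b l < b (l+1)" using sa sb l by auto
      have c1: "\<not> UU a b m (a l - 1) (b (l+1) - 1)"
        unfolding UU_def
      proof
        assume "\<exists>k\<ge>1. k \<le> m \<and> a k \<le> a l - 1 \<and> b k \<le> b (l + 1) - 1"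
        then obtain k where k: "1 \<le> k" "k \<le> m" "a k \<le> a l - 1" "b k \<le> b (l + 1) - 1" by blast
        show False
        proof (cases "k \<le> l")
          case True then have "a l \<le> a k" using mono_a[where a=a and m=m and i=k and j=l, OF sa] k l by auto
          then show False using k al by linarith
        next
          case False then have "b (l+1) \<le> b k" using mono_b[where b=b and m=m and i="l+1" and j=k, OF sb] k l by auto
          then show False using k bl by linarith
        qed
      qed
      have c2: "UU a b m (a l - 1 + 1) (b (l+1) - 1)"
        unfolding UU_def using l al bl by (intro exI[of _ l]) auto
      have c3: "UU a b m (a l - 1) (b (l+1) - 1 + 1)"
        unfolding UU_def using l al bl by (intro exI[of _ "l+1"]) auto
      have "colon I (xy_monom (a l - 1) (b (l+1) - 1)) = PXY"
        using colon_PXY[OF c1 c2 c3] IM by simp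
      moreover have "homog t (xy_monom (a l - 1) (b (l+1) - 1) :: 'k poly poly)"
      proof -
        have tt: "t = (a l - 1) + (b (l+1) - 1)" using l al bl by arith
        show ?thesis unfolding tt by (rule homog_xy)
      qed
      ultimately show ?thesis using prime_PXY Ass_mem by metis
    next
      case l
      have c1: "\<not> UU a b m (a 1 + k) (b 1 - 1)" for k
      proof
        assume "UU a b m (a 1 + k) (b 1 - 1)"
        then obtain k' where k': "1 \<le> k'" "k' \<le> m" "b k' \<le> b 1 - 1" unfolding UU_def by blast
        have "b 1 \<le> b k'" using mono_b[where b=b and m=m and i=1 and j=k', OF sb] k' by simp
        then show False using l k' by linarith
      qed
      have c2: "UU a b m (a 1) (b 1 - 1 + 1)"
        unfolding UU_def using l m1 by (intro exI[of _ 1]) auto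
      have "colon I (xy_monom (a 1) (b 1 - 1)) = PY"
        using colon_PY[OF c1 c2] IM by simp
      moreover have "homog t (xy_monom (a 1) (b 1 - 1) :: 'k poly poly)"
      proof -
        have tt: "t = a 1 + (b 1 - 1)" using l by arith
        show ?thesis unfolding tt by (rule homog_xy)
      qed
      ultimately show ?thesis using prime_PY Ass_mem by metis
    next
      case r
      have c1: "\<not> UU a b m (a m - 1) (b m + k)" for k
      proof
        assume "UU a b m (a m - 1) (b m + k)"
        then obtain k' where k': "1 \<le> k'" "k' \<le> m" "a k' \<le> a m - 1" unfolding UU_def by blast
        have "a m \<le> a k'" using mono_a[where a=a and m=m and i=k' and j=m, OF sa] k' by simp
        then show False using r k' by linarith
      qed
      have c2: "UU a b m (a m - 1 + 1) (b m)"
        unfolding UU_def using r m1 by (intro exI[of _ m]) auto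
      have "colon I (xy_monom (a m - 1) (b m)) = PX"
        using colon_PX[OF c1 c2] IM by simp
      moreover have "homog t (xy_monom (a m - 1) (b m) :: 'k poly poly)"
      proof -
        have tt: "t = (a m - 1) + b m" using r by arith
        show ?thesis unfolding tt by (rule homog_xy)
      qed
      ultimately show ?thesis using prime_PX Ass_mem by metis
    qed
  qed
  have lower: "\<exists>t\<in>T. t \<le> d" if hf: "homog d f" "colon I f \<in> Ass I" for d f
  proof -
    define P where "P = colon I f"
    have pP: "is_prime_ideal P" using hf(2) unfolding P_def Ass_def by simp
    have idI: "is_ideal I" unfolding IM by (rule MM_ideal)
    have fnI: "f \<notin> I"
    proof
      assume "f \<in> I"
      then have "\<forall>g. g * f \<in> I" using idI by (simp add: ideal_mult)
      then have "P = UNIV" unfolding P_def colon_def by auto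
      then show False using pP by (simp add: is_prime_ideal_def)
    qed
    have memP: "xy_monom s t \<in> P \<longleftrightarrow> (\<forall>i j. coeff (coeff f j) i \<noteq> 0 \<longrightarrow> U (i+s) (j+t))" for s t
      unfolding P_def colon_def U_def using IM mon_mult_in[of s t f a b m]
      by (simp add: mult.commute[of "xy_monom s t"])
    have "f \<notin> MM a b m" using fnI IM by simp
    then obtain i0 j0 where ij0: "coeff (coeff f j0) i0 \<noteq> 0" "\<not> U i0 j0"
      unfolding MM_def U_def by auto
    have IP: "I \<subseteq> P" unfolding P_def colon_def using ideal_mult[OF idI] by (auto simp: mult.commute[of _ f])
    have gen: "xy_monom (a 1) 0 * xy_monom 0 (b 1) \<in> P"
    proof -
      have "xy_monom (a 1) (b 1) \<in> ideal_gen {xy_monom (a i) (b i) | i. 1 \<le> i \<and> i \<le> m}"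
        using m1 by (intro subsetD[OF ideal_gen_sup] CollectI exI[of _ 1]) simp
      then have "xy_monom (a 1) (b 1) \<in> I" using assms(4) by simp
      then have "xy_monom (a 1) (b 1) \<in> P" using IP by (rule subsetD[rotated])
      then show ?thesis by (simp add: xy_monom_mult)
    qed
    have powX: "xy_monom s 0 \<notin> P" if "xy_monom 1 0 \<notin> P" for s
      using prime_pow[OF pP that, of s] by simp
    have powY: "xy_monom 0 s \<notin> P" if "xy_monom 0 1 \<notin> P" for s
      using prime_pow[OF pP that, of s] by simp
    show ?thesis
    proof (cases "xy_monom 1 0 \<in> P")
      case X: True
      show ?thesis
      proof (cases "xy_monom 0 1 \<in> P")
        case Y: True
        have "U (i0+1) j0" "U i0 (j0+1)" using X Y ij0(1) memP by auto
        then obtain l where "1 \<le> l" "l \<le> m - 1" "i0 + j0 = a l + b (l+1) - 2"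
          using socle[where a=a and b=b and m=m, OF sa sb] ij0(2) unfolding U_def by blast
        moreover have "i0 + j0 = d" using hf(1) ij0(1) unfolding homog_def by blast
        ultimately have "d \<in> T" unfolding T_def D_def by auto
        then show ?thesis by blast
      next
        case Y: False
        have "xy_monom 0 (b m) \<notin> P" using powY Y by blast
        then obtain i j where ij: "coeff (coeff f j) i \<noteq> 0" "\<not> U i (j + b m)"
          using memP by auto
        have "U (i+1) j" using X ij(1) memP by auto
        then obtain k where k: "1 \<le> k" "k \<le> m" "a k \<le> i+1" "b k \<le> j" unfolding U_def UU_def by blast
        have ami: "i < a m"
        proof (rule ccontr)
          assume "\<not> i < a m"
          then have "UU a b m i (j + b m)" unfolding UU_def using m1 by (intro exI[of _ m]) auto
          then show False using ij(2) unfolding U_def by simp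
        qed
        have "k = m"
        proof (rule ccontr)
          assume "k \<noteq> m" then have "a k > a m" using sa k by auto
          then show False using k ami by linarith
        qed
        have "d = i + j" using hf(1) ij(1) unfolding homog_def by auto
        moreover have "a m + b m - 1 \<in> T" unfolding T_def using ami by auto
        ultimately show ?thesis using \<open>k = m\<close> k ami by (intro bexI[of _ "a m + b m - 1"]) auto
      qed
    next
      case X: False
      show ?thesis
      proof (cases "xy_monom 0 1 \<in> P")
        case Y: True
        have "xy_monom (a 1) 0 \<notin> P" using powX X by blast
        then obtain i j where ij: "coeff (coeff f j) i \<noteq> 0" "\<not> U (i + a 1) j"
          using memP by auto
        have "U i (j+1)" using Y ij(1) memP by auto
        then obtain k where k: "1 \<le> k" "k \<le> m" "a k \<le> i" "b k \<le> j+1" unfolding U_def UU_def by blast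
        have b1j: "j < b 1"
        proof (rule ccontr)
          assume "\<not> j < b 1"
          then have "UU a b m (i + a 1) j" unfolding UU_def using m1 by (intro exI[of _ 1]) auto
          then show False using ij(2) unfolding U_def by simp
        qed
        have "k = 1"
        proof (rule ccontr)
          assume "k \<noteq> 1" then have "b k > b 1" using sb k by auto
          then show False using k b1j by linarith
        qed
        have "d = i + j" using hf(1) ij(1) unfolding homog_def by auto
        moreover have "a 1 + b 1 - 1 \<in> T" unfolding T_def using b1j by auto
        ultimately show ?thesis using \<open>k = 1\<close> k b1j by (intro bexI[of _ "a 1 + b 1 - 1"]) auto
      next
        case Y: False
        have "xy_monom (a 1) 0 \<notin> P" "xy_monom 0 (b 1) \<notin> P" using powX X powY Y by blast+
        then show ?thesis using gen pP unfolding is_prime_ideal_def by blast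
      qed
    qed
  qed
  have "vnum I = Min T"
    unfolding vnum_def
  proof (rule Least_equality)
    show "\<exists>f. homog (Min T) f \<and> colon I f \<in> Ass I" using good Min_in[OF finT neT] by blast
  next
    fix y assume "\<exists>f. homog y f \<and> colon I f \<in> Ass I"
    then obtain t where "t \<in> T" "t \<le> y" using lower by blast
    then show "Min T \<le> y" using Min_le[OF finT] by (meson le_trans)
  qed
  then show ?thesis using rhs by simp
qed


end
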